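(* Let $\mathcal{G}=(\vec V,\vec E)$ be a DAG with maximum (in plus out) degree $\Delta$, let $k\ge 2$, and let $V_i,V_j\in\vec V$ be non-adjacent. If $|\vec A_{ij}|\ge(2+\Delta^2)(\lceil\lg k\rceil+1)$, then an independence preserving augmentation $(\vec S_i^+,\vec S_j^+)$ of $(V_i,V_j)$ exists.
   Context: $\operatorname{\mathbf{DE}}(V)$ denotes the descendants of $V$ in $\mathcal{G}$; $\vec D_{ij}=\operatorname{\mathbf{DE}}(V_i)\cap\operatorname{\mathbf{DE}}(V_j)$ and $\vec A_{ij}=\vec V\setminus\vec D_{ij}$. For sets $\vec S_i,\vec S_j\subseteq\vec V\setminus\{V_i,V_j\}$, the ordered pair $(\vec S_i^+,\vec S_j^+)=(\vec S_i\cup\{V_i\},\vec S_j\cup\{V_j\})$ is an independence preserving augmentation (IPA) of $(V_i,V_j)$ if for some $\vec C\subset\vec V$, $\vec S_i^+$ and $\vec S_j^+$ are d-separated by $\vec C$ in $\mathcal{G}$. In the paper's construction the IPA has $|\vec S_i|=|\vec S_j|=\lceil\lg k\rceil$ with $\vec S_i,\vec S_j\subseteq\vec A_{ij}$. *)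

theory Defs
  imports Complex_Main
begin

definition is_dag :: "'a set \<Rightarrow> ('a \<times> 'a) set \<Rightarrow> bool" where
  "is_dag V E \<longleftrightarrow> finite V \<and> E \<subseteq> V \<times> V \<and> acyclic E"

definition degree :: "('a \<times> 'a) set \<Rightarrow> 'a \<Rightarrow> nat" where
  "degree E v = card {u. (u, v) \<in> E} + card {w. (v, w) \<in> E}"

definition max_degree :: "'a set \<Rightarrow> ('a \<times> 'a) set \<Rightarrow> nat" where
  "max_degree V E = Max (degree E ` V)"

definition adjacent :: "('a \<times> 'a) set \<Rightarrow> 'a \<Rightarrow> 'a \<Rightarrow> bool" where
  "adjacent E u v \<longleftrightarrow> (u, v) \<in> E \<or> (v, u) \<in> E"

definition DE :: "'a set \<Rightarrow> ('a \<times> 'a) set \<Rightarrow> 'a \<Rightarrow> 'a set" where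
  "DE V E v = {w \<in> V. (v, w) \<in> E\<^sup>*}"

definition D_set :: "'a set \<Rightarrow> ('a \<times> 'a) set \<Rightarrow> 'a \<Rightarrow> 'a \<Rightarrow> 'a set" where
  "D_set V E vi vj = DE V E vi \<inter> DE V E vj"

definition A_set :: "'a set \<Rightarrow> ('a \<times> 'a) set \<Rightarrow> 'a \<Rightarrow> 'a \<Rightarrow> 'a set" where
  "A_set V E vi vj = V - D_set V E vi vj"

definition is_path :: "('a \<times> 'a) set \<Rightarrow> 'a list \<Rightarrow> bool" where
  "is_path E p \<longleftrightarrow> length p \<ge> 2 \<and> distinct p \<and>
     (\<forall>i. Suc i < length p \<longrightarrow> adjacent E (p ! i) (p ! Suc i))"

text \<open>Interior vertex at position i (0 < i < length p - 1) is a collider.\<close>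
definition collider :: "('a \<times> 'a) set \<Rightarrow> 'a list \<Rightarrow> nat \<Rightarrow> bool" where
  "collider E p i \<longleftrightarrow> (p ! (i - 1), p ! i) \<in> E \<and> (p ! Suc i, p ! i) \<in> E"

definition blocked :: "'a set \<Rightarrow> ('a \<times> 'a) set \<Rightarrow> 'a set \<Rightarrow> 'a list \<Rightarrow> bool" where
  "blocked V E Z p \<longleftrightarrow> (\<exists>i. 0 < i \<and> Suc i < length p \<and>
      ((\<not> collider E p i \<and> p ! i \<in> Z) \<or>
       (collider E p i \<and> DE V E (p ! i) \<inter> Z = {})))"

definition d_separated :: "'a set \<Rightarrow> ('a \<times> 'a) set \<Rightarrow> 'a set \<Rightarrow> 'a set \<Rightarrow> 'a set \<Rightarrow> bool" where
  "d_separated V E X Y Z \<longleftrightarrow> X \<subseteq> V \<and> Y \<subseteq> V \<and> Z \<subseteq> V \<and>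
     X \<inter> Y = {} \<and> X \<inter> Z = {} \<and> Y \<inter> Z = {} \<and>
     (\<forall>p. is_path E p \<and> hd p \<in> X \<and> last p \<in> Y \<longrightarrow> blocked V E Z p)"

definition is_IPA :: "'a set \<Rightarrow> ('a \<times> 'a) set \<Rightarrow> 'a \<Rightarrow> 'a \<Rightarrow> 'a set \<Rightarrow> 'a set \<Rightarrow> bool" where
  "is_IPA V E vi vj Si Sj \<longleftrightarrow> Si \<subseteq> V - {vi, vj} \<and> Sj \<subseteq> V - {vi, vj} \<and>
     (\<exists>C. C \<subset> V \<and> d_separated V E (insert vi Si) (insert vj Sj) C)"

end

theory Submission
  imports Defs
begin

lemma D_closed: "(w,u)\<in>E \<Longrightarrow> E \<subseteq> V\<times>V \<Longrightarrow> w \<in> D_set V E vi vj \<Longrightarrow> u \<in> D_set V E vi vj"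
  by (auto simp: D_set_def DE_def intro: rtrancl_into_rtrancl)

lemma DE_sub: "w \<in> D_set V E vi vj \<Longrightarrow> DE V E w \<subseteq> D_set V E vi vj"
  by (auto simp: D_set_def DE_def intro: rtrancl_trans)

lemma path_blocked:
  assumes EV: "E \<subseteq> V\<times>V" and acyc: "acyclic E"
  and CD: "C = (V - D_set V E vi vj) - (X \<union> Y)"
  and XD: "X \<inter> D_set V E vi vj \<subseteq> {vi}" and YD: "Y \<inter> D_set V E vi vj \<subseteq> {vj}"
  and XY: "X \<inter> Y = {}"
  and N1: "\<And>x y. x\<in>X \<Longrightarrow> y\<in>Y \<Longrightarrow> \<not> adjacent E x y"
  and N2: "\<And>x y c. x\<in>X \<Longrightarrow> y\<in>Y \<Longrightarrow> (x,c)\<in>E \<Longrightarrow> (y,c)\<in>E \<Longrightarrow> c \<in> D_set V E vi vj"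
  and P: "is_path E p" and H: "hd p \<in> X" and La: "last p \<in> Y"
  shows "blocked V E C p"
proof (rule ccontr)
  assume nb: "\<not> blocked V E C p"
  define D where "D = D_set V E vi vj"
  define n where "n = length p"
  have n2: "n \<ge> 2" and adj: "\<And>i. Suc i < n \<Longrightarrow> adjacent E (p!i) (p!Suc i)"
    using P by (auto simp: is_path_def n_def)
  have pne: "p \<noteq> []" using n2 n_def by auto
  have nbi: "\<And>i. 0<i \<Longrightarrow> Suc i < n \<Longrightarrow> (\<not> collider E p i \<longrightarrow> p!i \<notin> C) \<and> (collider E p i \<longrightarrow> DE V E (p!i) \<inter> C \<noteq> {})"
    using nb unfolding blocked_def n_def by blast
  have h0: "p!0 \<in> X" using H pne by (simp add: hd_conv_nth)
  have hl: "p!(n-1) \<in> Y" using La pne by (simp add: last_conv_nth n_def)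
  have pV: "p!i \<in> V" if "i < n" for i
  proof (cases "Suc i < n")
    case True then show ?thesis using adj[OF True] EV by (auto simp: adjacent_def)
  next
    case False
    then have "i > 0" using n2 that by auto
    then have "Suc (i-1) < n" using that by auto
    from adj[OF this] show ?thesis using EV \<open>i>0\<close> by (auto simp: adjacent_def)
  qed
  have colD: "p!i \<notin> D" if "0<i" "Suc i<n" "collider E p i" for i
  proof
    assume "p!i \<in> D"
    then have "DE V E (p!i) \<inter> C = {}" using DE_sub[of "p!i" V E vi vj] CD D_def by auto
    then show False using nbi[OF that(1,2)] that(3) by auto
  qed
  have cyc: "False" if "(a,b) \<in> E" "(b,a) \<in> E\<^sup>*" for a b
    using rtrancl_into_trancl2[OF that] acyc by (auto simp: acyclic_def)
  have RW: "\<And>r. n - r = m \<Longrightarrow> 0<r \<Longrightarrow> Suc r < n \<Longrightarrow> p!r \<in> D \<Longrightarrow> (p!r, p!Suc r) \<in> E \<Longrightarrow> False" for m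
  proof (induction m)
    case 0 then show ?case by auto
  next
    case (Suc m r)
    have d1: "p!Suc r \<in> D" using D_closed[OF Suc.prems(5) EV] Suc.prems(4) D_def by auto
    show ?case
    proof (cases "Suc (Suc r) = n")
      case True
      then have "p!Suc r \<in> Y" using hl by (metis diff_Suc_1)
      then have "p!Suc r = vj" using YD d1 D_def by auto
      moreover have "(vj, p!r) \<in> E\<^sup>*" using Suc.prems(4) D_def by (auto simp: D_set_def DE_def)
      ultimately show False using cyc Suc.prems(5) by metis
    next
      case False
      then have l: "Suc (Suc r) < n" using Suc.prems by auto
      have "\<not> collider E p (Suc r)" using colD[OF _ l] d1 by auto
      then have "(p!Suc(Suc r), p!Suc r) \<notin> E" using Suc.prems(5) by (simp add: collider_def)
      then have e: "(p!Suc r, p!Suc(Suc r)) \<in> E" using adj[OF l] by (auto simp: adjacent_def)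
      have "n - Suc r = m" using Suc.prems(1) by arith
      then show False using Suc.IH[of "Suc r"] l d1 e by auto
    qed
  qed
  have LW: "\<And>r. 0<r \<Longrightarrow> Suc r < n \<Longrightarrow> p!r \<in> D \<Longrightarrow> (p!r, p!(r-1)) \<in> E \<Longrightarrow> False"
  proof -
    fix r show "0<r \<Longrightarrow> Suc r < n \<Longrightarrow> p!r \<in> D \<Longrightarrow> (p!r, p!(r-1)) \<in> E \<Longrightarrow> False"
    proof (induction r)
      case 0 then show ?case by auto
    next
      case (Suc r)
      have d1: "p!r \<in> D" using D_closed[of "p!Suc r" "p!r" E V] Suc.prems EV D_def by auto
      show ?case
      proof (cases "r = 0")
        case True
        then have "p!r = vi" using h0 XD d1 D_def by auto
        moreover have "(vi, p!Suc r) \<in> E\<^sup>*" using Suc.prems(3) D_def by (auto simp: D_set_def DE_def)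
        ultimately show False using cyc Suc.prems(4) by auto
      next
        case False
        then have r0: "0 < r" by auto
        have l: "Suc r < n" using Suc.prems by auto
        have "\<not> collider E p r" using colD[OF r0 l] d1 by auto
        then have "(p!(r-1), p!r) \<notin> E" using Suc.prems(4) by (simp add: collider_def)
        moreover have "Suc (r-1) < n" using l by auto
        ultimately have e: "(p!r, p!(r-1)) \<in> E" using adj[of "r-1"] r0 by (auto simp: adjacent_def)
        show False using Suc.IH r0 l d1 e by auto
      qed
    qed
  qed
  have notD: "p!i \<notin> D" if "0<i" "Suc i<n" for i
  proof
    assume iD: "p!i \<in> D"
    have nc: "\<not> collider E p i" using colD[OF that] iD by auto
    have a1: "adjacent E (p!(i-1)) (p!i)" using adj[of "i-1"] that by auto
    have a2: "adjacent E (p!i) (p!Suc i)" using adj[of i] that by auto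
    have "(p!i, p!(i-1)) \<in> E \<or> (p!i, p!Suc i) \<in> E"
      using nc a1 a2 by (auto simp: collider_def adjacent_def)
    then show False using LW[OF that iD] RW[OF refl that iD] by auto
  qed
  have ncXY: "p!i \<in> X \<union> Y" if "0<i" "Suc i<n" "\<not> collider E p i" for i
    using nbi[OF that(1,2)] that(3) notD[OF that(1,2)] pV[of i] that(2) CD D_def by auto
  define T where "T = {i. i<n \<and> p!i \<in> X}"
  define t where "t = Max T"
  have fT: "finite T" unfolding T_def by auto
  have "0 \<in> T" using h0 n2 T_def by auto
  then have tT: "t \<in> T" using fT t_def Max_in[OF fT] by blast
  have tmax: "\<And>i. i \<in> T \<Longrightarrow> i \<le> t" using fT t_def by auto
  have tX: "p!t \<in> X" and tn: "t < n" using tT T_def by auto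
  have "t \<noteq> n - 1" using tX hl XY by auto
  then have st: "Suc t < n" using tn by auto
  have s1X: "p!Suc t \<notin> X" using tmax[of "Suc t"] st T_def by auto
  have a: "adjacent E (p!t) (p!Suc t)" using adj[OF st] .
  have s1Y: "p!Suc t \<notin> Y" using N1[OF tX] a by auto
  have "Suc t \<noteq> n - 1" using s1Y hl by auto
  then have st2: "Suc (Suc t) < n" using st by auto
  have col: "collider E p (Suc t)" using ncXY[of "Suc t"] st2 s1X s1Y by auto
  then have e1: "(p!t, p!Suc t) \<in> E" and e2: "(p!Suc (Suc t), p!Suc t) \<in> E" by (auto simp: collider_def)
  have s2: "p!Suc (Suc t) \<in> Y"
  proof (cases "Suc (Suc (Suc t)) = n")
    case True then show ?thesis using hl by (metis diff_Suc_1)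
  next
    case False
    then have l: "Suc (Suc (Suc t)) < n" using st2 by auto
    have "\<not> collider E p (Suc (Suc t))"
      using e2 cyc[of "p!Suc (Suc t)" "p!Suc t"] by (auto simp: collider_def)
    then have "p!Suc (Suc t) \<in> X \<union> Y" using ncXY l by auto
    moreover have "p!Suc (Suc t) \<notin> X" using tmax[of "Suc (Suc t)"] st2 T_def by auto
    ultimately show ?thesis by auto
  qed
  have "p!Suc t \<in> D" using N2[OF tX s2 e1 e2] D_def by auto
  then show False using notD[of "Suc t"] st2 by auto
qed
definition ball2 :: "('a \<times> 'a) set \<Rightarrow> 'a \<Rightarrow> 'a set" where
  "ball2 E x = insert x ({w. adjacent E x w} \<union> {w. \<exists>c. (x,c)\<in>E \<and> (w,c)\<in>E})"

lemma ball2_sym: "y \<in> ball2 E x \<longleftrightarrow> x \<in> ball2 E y"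
  by (auto simp: ball2_def adjacent_def)

lemma ball2_finite: "E \<subseteq> V\<times>V \<Longrightarrow> finite V \<Longrightarrow> finite (ball2 E x)"
  by (rule finite_subset[of _ "insert x V"]) (auto simp: ball2_def adjacent_def)

lemma card_ins_le: "card (insert x A) \<le> Suc (card A)"
  by (cases "finite A") (auto simp: card_insert_if)

lemma nat_aux: "(a::nat) + b \<le> d \<Longrightarrow> a + b * d \<le> d^2"
proof (cases "d = 0")
  case True then show "a + b \<le> d \<Longrightarrow> ?thesis" by auto
next
  case False
  assume h: "a + b \<le> d"
  have "a + b * d \<le> a * d + b * d" using False by auto
  also have "\<dots> = (a+b)*d" by (simp add: algebra_simps)
  also have "\<dots> \<le> d * d" using h by auto
  finally show ?thesis by (simp add: power2_eq_square)
qed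

lemma ball2_card:
  assumes EV: "E \<subseteq> V\<times>V" and fV: "finite V" and xV: "x \<in> V"
    and deg: "\<And>v. v \<in> V \<Longrightarrow> degree E v \<le> d"
  shows "card (ball2 E x) \<le> 1 + d^2"
proof -
  define In where "In = (\<lambda>c. {u. (u,c)\<in>E})"
  define Out where "Out = {w. (x,w)\<in>E}"
  have fIn: "finite (In c)" for c using EV fV unfolding In_def
    by (metis (no_types, lifting) finite_subset mem_Collect_eq mem_Sigma_iff subsetD subsetI)
  have fOut: "finite Out" using EV fV unfolding Out_def
    by (metis (no_types, lifting) finite_subset mem_Collect_eq mem_Sigma_iff subsetD subsetI)
  have sub: "ball2 E x \<subseteq> insert x (In x \<union> (\<Union>c\<in>Out. insert c (In c - {x})))"
    by (auto simp: ball2_def adjacent_def In_def Out_def)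
  have "card (ball2 E x) \<le> card (insert x (In x \<union> (\<Union>c\<in>Out. insert c (In c - {x}))))"
    by (rule card_mono[OF _ sub]) (use fIn fOut in auto)
  also have "\<dots> \<le> Suc (card (In x \<union> (\<Union>c\<in>Out. insert c (In c - {x}))))"
    by (rule card_ins_le)
  also have "card (In x \<union> (\<Union>c\<in>Out. insert c (In c - {x}))) \<le> card (In x) + card (\<Union>c\<in>Out. insert c (In c - {x}))"
    by (rule card_Un_le)
  also have "card (\<Union>c\<in>Out. insert c (In c - {x})) \<le> (\<Sum>c\<in>Out. card (insert c (In c - {x})))"
    by (rule card_UN_le[OF fOut])
  also have "\<dots> \<le> (\<Sum>c\<in>Out. d)"
  proof (rule sum_mono)
    fix c assume cO: "c \<in> Out"
    then have xc: "x \<in> In c" and cV: "c \<in> V" using EV by (auto simp: In_def Out_def)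
    have "card (insert c (In c - {x})) \<le> Suc (card (In c - {x}))" by (rule card_ins_le)
    also have "\<dots> = card (In c)"
    proof -
      have "card (In c - {x}) = card (In c) - 1" using xc by (simp add: card_Diff_singleton)
      moreover have "card (In c) > 0" using xc fIn[of c] card_gt_0_iff by blast
      ultimately show ?thesis by simp
    qed
    also have "\<dots> \<le> degree E c" by (simp add: degree_def In_def)
    also have "\<dots> \<le> d" using deg cV by auto
    finally show "card (insert c (In c - {x})) \<le> d" .
  qed
  also have "(\<Sum>c\<in>Out. d) = card Out * d" by simp
  finally have "card (ball2 E x) \<le> 1 + (card (In x) + card Out * d)" by simp
  moreover have "card (In x) + card Out \<le> d" using deg[OF xV] by (simp add: degree_def In_def Out_def)
  ultimately show ?thesis using nat_aux by (metis add_le_mono le_refl order_trans)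
qed

theorem lemma18:
  fixes V :: "'a set" and E :: "('a \<times> 'a) set" and k :: nat and vi vj :: 'a
  assumes "is_dag V E"
    and "k \<ge> 2"
    and "vi \<in> V" and "vj \<in> V" and "vi \<noteq> vj"
    and "\<not> adjacent E vi vj"
    and "real (card (A_set V E vi vj)) \<ge>
           (2 + real (max_degree V E) ^ 2) * (real (nat \<lceil>log 2 (real k)\<rceil>) + 1)"
  shows "\<exists>Si Sj. is_IPA V E vi vj Si Sj \<and>
           Si \<subseteq> A_set V E vi vj \<and> Sj \<subseteq> A_set V E vi vj \<and>
           card Si = nat \<lceil>log 2 (real k)\<rceil> \<and> card Sj = nat \<lceil>log 2 (real k)\<rceil>"
proof -
  define L where "L = nat \<lceil>log 2 (real k)\<rceil>"
  define d where "d = max_degree V E"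
  define D where "D = D_set V E vi vj"
  define A where "A = A_set V E vi vj"
  have fV: "finite V" and EV: "E \<subseteq> V \<times> V" and acyc: "acyclic E" using assms(1) by (auto simp: is_dag_def)
  have AD: "A = V - D" by (simp add: A_def D_def A_set_def)
  have fA: "finite A" using fV AD by auto
  have deg: "\<And>v. v \<in> V \<Longrightarrow> degree E v \<le> d"
    unfolding d_def max_degree_def using fV by (auto intro: Max_ge)
  have bc: "\<And>x. x \<in> V \<Longrightarrow> card (ball2 E x) \<le> 1 + d^2"
    using ball2_card[OF EV fV _ deg] by blast
  have "real ((2 + d^2) * (L + 1)) = (2 + real d ^2) * (real L + 1)" by (simp add: algebra_simps)
  then have "real ((2 + d^2) * (L + 1)) \<le> real (card A)" using assms(7) by (simp only: A_def d_def L_def)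
  then have cA: "(2 + d^2) * (L + 1) \<le> card A" by linarith
  define B1 where "B1 = insert vi (ball2 E vj)"
  have "card B1 \<le> 2 + d^2" using bc[OF assms(4)] card_ins_le[of vi "ball2 E vj"] unfolding B1_def
    by linarith
  have "card A - card B1 \<le> card (A - B1)"
    by (rule diff_card_le_card_Diff) (simp add: B1_def ball2_finite[OF EV fV])
  moreover have "L \<le> card A - card B1"
  proof -
    have "(2 + d^2) * (L + 1) = (2 + d^2) * L + (2 + d^2)" by (simp add: algebra_simps)
    moreover have "L \<le> (2 + d^2) * L" by simp
    ultimately show ?thesis using cA \<open>card B1 \<le> 2 + d^2\<close> by linarith
  qed
  ultimately have "L \<le> card (A - B1)" by linarith
  then obtain Si where Si: "Si \<subseteq> A - B1" "card Si = L" "finite Si" by (meson obtain_subset_with_card_n)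
  define X where "X = insert vi Si"
  have viSi: "vi \<notin> Si" using Si B1_def by auto
  have cX: "card X = L + 1" using Si viSi X_def by auto
  have XV: "X \<subseteq> V" using Si AD assms(3) X_def by auto
  define U where "U = (\<Union>x\<in>X. ball2 E x)"
  have "card U \<le> (\<Sum>x\<in>X. card (ball2 E x))" unfolding U_def by (rule card_UN_le) (use Si X_def in auto)
  also have "\<dots> \<le> card X * (1 + d^2)" using sum_bounded_above[of X "\<lambda>x. card (ball2 E x)" "1 + d^2"] bc XV by auto
  finally have cU: "card U \<le> (L+1) * (1 + d^2)" using cX by simp
  define B2 where "B2 = insert vj U"
  have cB2: "card B2 \<le> (L+1) * (1 + d^2) + 1" using cU card_ins_le[of vj U] unfolding B2_def
    by linarith
  have fB2: "finite B2" unfolding B2_def U_def using Si X_def ball2_finite[OF EV fV] by auto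
  have "card A - card B2 \<le> card (A - B2)"
    by (rule diff_card_le_card_Diff) (rule fB2)
  moreover have "L \<le> card A - card B2"
  proof -
    have "(2 + d^2) * (L + 1) = (L + 1) * (1 + d^2) + 1 + L" by (simp add: algebra_simps)
    then show ?thesis using cA cB2 by linarith
  qed
  ultimately have "L \<le> card (A - B2)" by linarith
  then obtain Sj where Sj: "Sj \<subseteq> A - B2" "card Sj = L" "finite Sj" by (meson obtain_subset_with_card_n)
  define Y where "Y = insert vj Sj"
  define C where "C = (V - D) - (X \<union> Y)"
  have inb: "x \<in> ball2 E x" for x by (simp add: ball2_def)
  have XU: "X \<subseteq> U" using inb U_def by auto
  have YV: "Y \<subseteq> V" using Sj AD assms(4) Y_def by auto
  have XY: "X \<inter> Y = {}" using Sj XU B2_def Y_def X_def assms(5) Si B1_def inb by auto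
  have far: "y \<notin> ball2 E x" if "x \<in> X" "y \<in> Y" "\<not> (x = vi \<and> y = vj)" for x y
  proof (cases "y = vj")
    case True
    then have "x \<in> Si" using that X_def by auto
    then have "x \<notin> ball2 E vj" using Si B1_def by auto
    then show ?thesis using True ball2_sym by metis
  next
    case False
    then have "y \<in> Sj" using that Y_def by auto
    then show ?thesis using Sj B2_def U_def that(1) by auto
  qed
  have N1: "\<not> adjacent E x y" if "x \<in> X" "y \<in> Y" for x y
  proof (cases "x = vi \<and> y = vj")
    case True then show ?thesis using assms(6) by auto
  next
    case False then show ?thesis using far[OF that] by (auto simp: ball2_def)
  qed
  have N2: "c \<in> D_set V E vi vj" if "x \<in> X" "y \<in> Y" "(x,c)\<in>E" "(y,c)\<in>E" for x y c
  proof (cases "x = vi \<and> y = vj")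
    case True then show ?thesis using that EV by (auto simp: D_set_def DE_def)
  next
    case False then show ?thesis using far[OF that(1,2)] that(3,4) by (auto simp: ball2_def)
  qed
  have XD: "X \<inter> D_set V E vi vj \<subseteq> {vi}" using Si AD D_def X_def by auto
  have YD: "Y \<inter> D_set V E vi vj \<subseteq> {vj}" using Sj AD D_def Y_def by auto
  have blk: "blocked V E C p" if "is_path E p" "hd p \<in> X" "last p \<in> Y" for p
    by (rule path_blocked[OF EV acyc _ XD YD XY N1 N2 that]) (simp add: C_def D_def)
  have CV0: "C \<subseteq> V" by (auto simp: C_def)
  have XC: "X \<inter> C = {}" "Y \<inter> C = {}" by (auto simp: C_def)
  have dsep: "d_separated V E X Y C"
    unfolding d_separated_def using blk XV YV CV0 XY XC by blast
  have CV: "C \<subset> V" using C_def X_def assms(3) by auto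
  have "is_IPA V E vi vj Si Sj"
    unfolding is_IPA_def using dsep CV X_def Y_def Si Sj AD B1_def B2_def inb XU assms(3,4) by auto
  then show ?thesis using Si Sj A_def L_def by auto
qed
end
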